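(* Let $p,q$ be positive integers with $p+q$ odd. For every $n\ge1$: (a) $\mathcal{J}^{p,q}_n$ is a subgroup of $\mathrm{Aut}(T_{n+1})$; (b) $\psi_n:\mathcal{J}^{p,q}_n\to\mathbb{Z}_{2^{\lfloor n/2\rfloor}}$ is a group homomorphism; (c) $\Delta_n:\mathcal{J}^{p,q}_n\to D_{2^{\lfloor n/2\rfloor+1}}$ is a group homomorphism.
   Context: Let $p,q$ be positive integers with $p+q$ odd. $\mathbb{Z}_{2^k}$ denotes the integers modulo $2^k$ ($\mathbb{Z}_1$ trivial); as $p+q$ is odd, division by $p+q$ and by $(p+q)^2$ is well defined in $\mathbb{Z}_{2^k}$, and integers are read modulo $2^k$. For $m\ge1$, $D_{2m}$ is the dihedral group of order $2m$, realized as pairs $(f,x)$ with $f\in\mathbb{Z}_2$, $x\in\mathbb{Z}_m$ and product $(f_1,x_1)(f_2,x_2)=(f_1+f_2,\,x_1+(-1)^{f_1}x_2)$. Define $\Phi:D_{2m}\to D_{2m}$ by $\Phi((f,x))=(f,\ \delta(f=1)(p+q)(p-q)-x)$, where $\delta(f=1)$ is $1$ if $f=1$ and $0$ otherwise. Groups $\mathrm{Aut}(T_k)$ (automorphisms of the rooted binary tree, equivalently iterated wreath products of $\mathbb{Z}_2$): $\mathrm{Aut}(T_1)$ is trivial; for $k\ge1$, $\mathrm{Aut}(T_{k+1})$ is the set of triples $g=(g_f,g_L,g_R)$ with $g_f\in\mathbb{Z}_2$, $g_L,g_R\in\mathrm{Aut}(T_k)$, with product $(f,A,B)(g,C,D)=(f+g,AC,BD)$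 if $f=0$ and $(f+g,AD,BC)$ if $f=1$. Subscripts are chained: $g_{LR}=(g_L)_R$, $g_{Lf}=(g_L)_f$, etc. Recursively define subsets $\mathcal{J}^{p,q}_n\subseteq\mathrm{Aut}(T_{n+1})$ and maps $\psi_n:\mathcal{J}^{p,q}_n\to\mathbb{Z}_{2^{\lfloor n/2\rfloor}}$, $\Delta_n:\mathcal{J}^{p,q}_n\to D_{2^{\lfloor n/2\rfloor+1}}$: $n=1$: $\mathcal{J}_1=\mathrm{Aut}(T_2)\cong\mathbb{Z}_2$, $\psi_1(g)=0$, $\Delta_1(g)=(g_f,0)$. $n=2$: $\mathcal{J}_2=\{g\in\mathrm{Aut}(T_3): g_L=g_R\}$, $\psi_2(g)=\delta(g_{Lf}=1)\in\mathbb{Z}_2$, $\Delta_2(g)=(g_f,\psi_2(g))$. $n\ge3$: $\mathcal{J}_n=\{g\in\mathrm{Aut}(T_{n+1}): g_L,g_R\in\mathcal{J}_{n-1},\ \Delta_{n-1}(g_L)=\Phi(\Delta_{n-1}(g_R))\}$; $\psi_n(g)=\dfrac{\psi_{n-1}(g_L)+\psi_{n-1}(g_R)}{p+q}$ for odd $n$, and $\psi_n(g)=\dfrac{2(\psi_{n-2}(g_{LL})+\psi_{n-2}(g_{RL}))-\delta(g_{Lf}=1)(p+q)(p-q)}{(p+q)^2}$ for even $n$ (here $2\psi_{n-2}(\cdot)$, with $\psi_{n-2}\in\mathbb{Z}_{2^{n/2-1}}$, is read in $\mathbb{Z}_{2^{n/2}}$); $\Delta_n(g)=(g_f,\ \psi_{n-1}(g_L)-\psi_{n-1}(g_R))$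 for odd $n$, and $\Delta_n(g)=(g_f,\ (p+q)\psi_n(g)-2\psi_{n-1}(g_R))$ for even $n$. *)

theory Defs
  imports "HOL-Algebra.Algebra"
begin

text \<open>An element of Aut(T_{d+1}) is a complete binary tree of depth d whose internal
  nodes carry the bit g_f (Lf is the unique element of the trivial group Aut(T_1)).\<close>

datatype tree = Lf | Nd bool tree tree

fun tf :: "tree \<Rightarrow> bool" where
  "tf (Nd f l r) = f" | "tf Lf = False"
fun tL :: "tree \<Rightarrow> tree" where
  "tL (Nd f l r) = l" | "tL Lf = Lf"
fun tR :: "tree \<Rightarrow> tree" where
  "tR (Nd f l r) = r" | "tR Lf = Lf"

fun wf_tree :: "nat \<Rightarrow> tree \<Rightarrow> bool" where
  "wf_tree 0 t = (t = Lf)"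
| "wf_tree (Suc d) Lf = False"
| "wf_tree (Suc d) (Nd f l r) = (wf_tree d l \<and> wf_tree d r)"

fun tmul :: "tree \<Rightarrow> tree \<Rightarrow> tree" where
  "tmul (Nd f a b) (Nd g c d) =
     (if f then Nd (f \<noteq> g) (tmul a d) (tmul b c) else Nd (f \<noteq> g) (tmul a c) (tmul b d))"
| "tmul _ _ = Lf"

fun tone :: "nat \<Rightarrow> tree" where
  "tone 0 = Lf" | "tone (Suc d) = Nd False (tone d) (tone d)"

definition autT :: "nat \<Rightarrow> tree monoid" where
  "autT k = \<lparr>carrier = {t. wf_tree (k - 1) t}, monoid.mult = tmul, one = tone (k - 1)\<rparr>"

text \<open>Z_{2^k} is the library group integer_mod_group (2^k) (carrier {0..<2^k}).
  Division by an odd d in Z_{2^k}: the unique residue x with d*x = a mod 2^k.\<close>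
definition zdiv :: "nat \<Rightarrow> int \<Rightarrow> int \<Rightarrow> int" where
  "zdiv k a d = (THE x. x \<in> {0..<2^k} \<and> (d * x) mod 2^k = a mod 2^k)"

text \<open>D_{2m}: pairs (f,x), f \<in> Z_2 (as bool), x \<in> Z_m (as {0..<m}),
  (f1,x1)(f2,x2) = (f1+f2, x1 + (-1)^f1 x2).\<close>
definition dihedral :: "nat \<Rightarrow> (bool \<times> int) monoid" where
  "dihedral m = \<lparr>carrier = UNIV \<times> {0..<int m},
     monoid.mult = (\<lambda>(f1, x1) (f2, x2). (f1 \<noteq> f2, (x1 + (if f1 then - x2 else x2)) mod int m)),
     one = (False, 0)\<rparr>"

definition Phi :: "int \<Rightarrow> int \<Rightarrow> nat \<Rightarrow> bool \<times> int \<Rightarrow> bool \<times> int" where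
  "Phi p q m d = (fst d, ((if fst d then (p + q) * (p - q) else 0) - snd d) mod int m)"

function psi :: "int \<Rightarrow> int \<Rightarrow> nat \<Rightarrow> tree \<Rightarrow> int" where
  "psi p q n g =
    (if n \<le> 1 then 0
     else if n = 2 then (if tf (tL g) then 1 else 0)
     else if odd n then
       zdiv (n div 2) (psi p q (n - 1) (tL g) + psi p q (n - 1) (tR g)) (p + q)
     else
       zdiv (n div 2)
         (2 * (psi p q (n - 2) (tL (tL g)) + psi p q (n - 2) (tL (tR g)))
            - (if tf (tL g) then (p + q) * (p - q) else 0))
         ((p + q)^2))"
  by pat_completeness auto
termination by (relation "measure (\<lambda>(p, q, n, g). n)") auto

definition Delta :: "int \<Rightarrow> int \<Rightarrow> nat \<Rightarrow> tree \<Rightarrow> bool \<times> int" where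
  "Delta p q n g =
    (if n = 1 then (tf g, 0)
     else if n = 2 then (tf g, psi p q 2 g)
     else if odd n then (tf g, (psi p q (n - 1) (tL g) - psi p q (n - 1) (tR g)) mod 2^(n div 2))
     else (tf g, ((p + q) * psi p q n g - 2 * psi p q (n - 1) (tR g)) mod 2^(n div 2)))"

fun J :: "int \<Rightarrow> int \<Rightarrow> nat \<Rightarrow> tree set" where
  "J p q 0 = {}"
| "J p q (Suc 0) = carrier (autT 2)"
| "J p q (Suc (Suc 0)) = {g \<in> carrier (autT 3). tL g = tR g}"
| "J p q (Suc (Suc (Suc m))) =
     {g \<in> carrier (autT (m + 4)). tL g \<in> J p q (m + 2) \<and> tR g \<in> J p q (m + 2) \<and>
        Delta p q (m + 2) (tL g) = Phi p q (2 ^ ((m + 2) div 2)) (Delta p q (m + 2) (tR g))}"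

end

theory Submission
  imports Defs
begin


fun tinv :: "tree \<Rightarrow> tree" where
  "tinv (Nd f a b) = (if f then Nd f (tinv b) (tinv a) else Nd f (tinv a) (tinv b))"
| "tinv Lf = Lf"

lemma wf_SucE: "wf_tree (Suc d) x \<Longrightarrow> (\<And>f l r. x = Nd f l r \<Longrightarrow> wf_tree d l \<Longrightarrow> wf_tree d r \<Longrightarrow> P) \<Longrightarrow> P"
  by (cases x) auto

lemma wf_tmul: "wf_tree d x \<Longrightarrow> wf_tree d y \<Longrightarrow> wf_tree d (tmul x y)"
  by (induction d arbitrary: x y) (auto elim!: wf_SucE)

lemma wf_tinv: "wf_tree d x \<Longrightarrow> wf_tree d (tinv x)"
  by (induction d arbitrary: x) (auto elim!: wf_SucE)

lemma wf_tone: "wf_tree d (tone d)"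
  by (induction d) auto

lemma tmul_assoc: "wf_tree d x \<Longrightarrow> wf_tree d y \<Longrightarrow> wf_tree d z \<Longrightarrow> tmul (tmul x y) z = tmul x (tmul y z)"
  by (induction d arbitrary: x y z) (auto elim!: wf_SucE)

lemma tone_left: "wf_tree d x \<Longrightarrow> tmul (tone d) x = x"
  by (induction d arbitrary: x) (auto elim!: wf_SucE)

lemma tone_right: "wf_tree d x \<Longrightarrow> tmul x (tone d) = x"
  by (induction d arbitrary: x) (auto elim!: wf_SucE)

lemma tinv_left: "wf_tree d x \<Longrightarrow> tmul (tinv x) x = tone d"
  by (induction d arbitrary: x) (auto elim!: wf_SucE)

lemma tinv_right: "wf_tree d x \<Longrightarrow> tmul x (tinv x) = tone d"
  by (induction d arbitrary: x) (auto elim!: wf_SucE)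

lemma group_autT: "group (autT k)"
  apply (rule groupI)
  apply (auto simp: autT_def wf_tmul wf_tone tmul_assoc tone_left)
  using tinv_left wf_tinv by blast

lemma inv_autT: "wf_tree (k - 1) x \<Longrightarrow> inv\<^bsub>autT k\<^esub> x = tinv x"
  apply (rule group.inv_equality[OF group_autT])
  by (auto simp: autT_def tinv_left wf_tinv)



definition dmul :: "int \<Rightarrow> bool \<times> int \<Rightarrow> bool \<times> int \<Rightarrow> bool \<times> int" where
  "dmul M a b = (fst a \<noteq> fst b, (snd a + (if fst a then - snd b else snd b)) mod M)"

definition dinv :: "int \<Rightarrow> bool \<times> int \<Rightarrow> bool \<times> int" where
  "dinv M a = (fst a, if fst a then snd a else (- snd a) mod M)"

lemma dihedral_mult_eq: "a \<otimes>\<^bsub>dihedral m\<^esub> b = dmul (int m) a b"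
  by (cases a; cases b) (simp add: dihedral_def dmul_def)

lemma Phi_dmul: "Phi p q m (dmul (int m) a b) = dmul (int m) (Phi p q m a) (Phi p q m b)"
  proof -
  obtain f1 x1 f2 x2 where ab: "a = (f1, x1)" "b = (f2, x2)" by (cases a, cases b)
  show ?thesis unfolding ab Phi_def dmul_def
    by (cases f1; cases f2; simp; simp only: mod_simps; simp add: algebra_simps mod_simps)
qed

lemma Phi_Phi: "0 \<le> snd a \<Longrightarrow> snd a < int m \<Longrightarrow> Phi p q m (Phi p q m a) = a"
  by (cases a) (auto simp: Phi_def mod_simps algebra_simps)

lemma Phi_dinv: "Phi p q m (dinv (int m) a) = dinv (int m) (Phi p q m a)"
  by (cases a) (auto simp: Phi_def dinv_def mod_simps algebra_simps)

lemma dinv_unique: "0 < M \<Longrightarrow> 0 \<le> snd a \<Longrightarrow> snd a < M \<Longrightarrow> 0 \<le> snd x \<Longrightarrow> snd x < M \<Longrightarrow>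
   fst x = fst a \<Longrightarrow> dmul M a x = (False, 0) \<Longrightarrow> x = dinv M a"
proof -
  assume h: "0 < M" "0 \<le> snd a" "snd a < M" "0 \<le> snd x" "snd x < M" "fst x = fst a" "dmul M a x = (False, 0)"
  then have e: "(snd a + (if fst a then - snd x else snd x)) mod M = 0" by (simp add: dmul_def)
  show ?thesis
  proof (cases "fst a")
    case True
    with e have "M dvd (snd a - snd x)" by (simp add: mod_eq_0_iff_dvd)
    then obtain t where "snd a - snd x = M * t" by blast
    with h have "M * t < M" "- M < M * t" by linarith+
    then have "M * t < M * 1" "M * (-1) < M * t" by simp_all
    then have "t < 1" "-1 < t" using mult_less_cancel_left_pos h(1) by blast+
    then have "t = 0" by simp
    then show ?thesis using True h `snd a - snd x = M * t` by (cases x; cases a) (auto simp: dinv_def)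
  next
    case False
    with e have "M dvd (snd a + snd x)" by (simp add: mod_eq_0_iff_dvd)
    then have "(- snd a) mod M = snd x mod M"
      by (metis add.commute minus_add_cancel mod_eq_dvd_iff uminus_add_conv_diff)
    then show ?thesis using False h by (cases x; cases a) (auto simp: dinv_def)
  qed
qed

lemma double_mod_self: assumes h: "0 \<le> (x::int)" "x < M" "(x + x) mod M = x" shows "x = 0"
proof (cases "x + x < M")
  case True
  then show ?thesis using h by simp
next
  case False
  have "(x + x - M) mod M = x + x - M" using False h by (intro mod_pos_pos_trivial) auto
  moreover have "(x + x - M) mod M = (x + x) mod M" by simp
  ultimately show "x = 0" using h by simp
qed

lemma coprime_odd_pow2: "odd (d::int) \<Longrightarrow> coprime d (2^k)"
  by simp

lemma odd_cancel: "odd (d::int) \<Longrightarrow> (d * x) mod 2^k = (d * y) mod 2^k \<Longrightarrow> x mod 2^k = y mod 2^k"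
proof -
  assume "odd d" "(d * x) mod 2^k = (d * y) mod 2^k"
  then have "(2::int)^k dvd d * (x - y)" by (simp add: mod_eq_dvd_iff right_diff_distrib)
  moreover have "coprime ((2::int)^k) d" using `odd d` by simp
  ultimately have "(2::int)^k dvd (x - y)" using coprime_dvd_mult_right_iff by blast
  then show ?thesis by (simp add: mod_eq_dvd_iff)
qed

lemma range_eq: "0 \<le> (x::int) \<Longrightarrow> x < M \<Longrightarrow> 0 \<le> y \<Longrightarrow> y < M \<Longrightarrow> x mod M = y mod M \<Longrightarrow> x = y"
  by simp

lemma zdiv_props: assumes "odd (d::int)"
  shows "0 \<le> zdiv k a d \<and> zdiv k a d < 2^k \<and> (d * zdiv k a d) mod 2^k = a mod 2^k"
proof -
  have "coprime d (2^k)" using assms by simp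
  then have "gcd d (2^k) = 1" by simp
  then obtain x v where xv: "x * d + v * 2^k = 1" using bezout_int[of d "2^k"] by auto
  have x: "(d * x) mod 2^k = 1 mod 2^k"
  proof -
    have "d * x - 1 = 2^k * (- v)" using xv by (simp add: algebra_simps)
    then have "(2::int)^k dvd d * x - 1" by (metis dvd_triv_left)
    then show ?thesis using mod_eq_dvd_iff by blast
  qed
  define y where "y = (x * a) mod 2^k"
  have y1: "y \<in> {0..<2^k}" by (simp add: y_def)
  have y2: "(d * y) mod 2^k = a mod 2^k"
  proof -
    have "(d * y) mod 2^k = (d * x * a) mod 2^k" by (simp add: y_def mod_simps mult.assoc)
    also have "\<dots> = ((d * x) mod 2^k * a) mod 2^k" by (simp add: mod_simps)
    also have "\<dots> = (1 mod 2^k * a) mod 2^k" using x by simp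
    also have "\<dots> = a mod 2^k" by (simp add: mod_simps)
    finally show ?thesis .
  qed
  have "\<exists>!z. z \<in> {0..<2^k} \<and> (d * z) mod 2^k = a mod 2^k"
  proof (rule ex1I[of _ y])
    show "y \<in> {0..<2^k} \<and> (d * y) mod 2^k = a mod 2^k" using y1 y2 by blast
    fix z :: int assume "z \<in> {0..<2^k} \<and> (d * z) mod 2^k = a mod 2^k"
    then have "z mod 2^k = y mod 2^k" using odd_cancel[OF assms, where k=k and x=z and y=y] y2 by simp
    then show "z = y" using y1 `z \<in> {0..<2^k} \<and> _` by simp
  qed
  then have "zdiv k a d \<in> {0..<2^k} \<and> (d * zdiv k a d) mod 2^k = a mod 2^k"
    unfolding zdiv_def by (rule theI')
  then show ?thesis by simp
qed

lemma zdiv_eq_iff: assumes "odd (d::int)" "0 \<le> (y::int)" "y < 2^k"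
  shows "zdiv k a d = y \<longleftrightarrow> (d * y) mod 2^k = a mod 2^k"
  using zdiv_props[OF assms(1), of k a] odd_cancel[OF assms(1), where k=k and x="zdiv k a d" and y=y] assms by auto



declare psi.simps[simp del]

lemma psi_le1: "n \<le> 1 \<Longrightarrow> psi p q n g = 0"
  by (subst psi.simps) simp

lemma psi_2: "psi p q 2 g = (if tf (tL g) then 1 else 0)"
  by (subst psi.simps) simp

lemma psi_odd: "3 \<le> n \<Longrightarrow> odd n \<Longrightarrow>
  psi p q n g = zdiv (n div 2) (psi p q (n - 1) (tL g) + psi p q (n - 1) (tR g)) (p + q)"
  by (subst psi.simps) auto

lemma psi_even: "4 \<le> n \<Longrightarrow> even n \<Longrightarrow>
  psi p q n g = zdiv (n div 2)
         (2 * (psi p q (n - 2) (tL (tL g)) + psi p q (n - 2) (tL (tR g)))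
            - (if tf (tL g) then (p + q) * (p - q) else 0))
         ((p + q)^2)"
  by (subst psi.simps) auto

lemma Delta_1: "Delta p q 1 g = (tf g, 0)"
  by (simp add: Delta_def)

lemma Delta_2: "Delta p q 2 g = (tf g, psi p q 2 g)"
  by (simp add: Delta_def)

lemma Delta_odd: "3 \<le> n \<Longrightarrow> odd n \<Longrightarrow>
  Delta p q n g = (tf g, (psi p q (n - 1) (tL g) - psi p q (n - 1) (tR g)) mod 2^(n div 2))"
  by (simp add: Delta_def)

lemma Delta_even: "4 \<le> n \<Longrightarrow> even n \<Longrightarrow>
  Delta p q n g = (tf g, ((p + q) * psi p q n g - 2 * psi p q (n - 1) (tR g)) mod 2^(n div 2))"
  by (auto simp add: Delta_def)

lemma J_1: "J p q 1 = {g. wf_tree 1 g}"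
  by (simp add: autT_def)

lemma J_2: "J p q 2 = {g. wf_tree 2 g \<and> tL g = tR g}"
  by (simp add: autT_def numeral_2_eq_2)

lemma J_ge3: "3 \<le> n \<Longrightarrow> J p q n = {g. wf_tree n g \<and> tL g \<in> J p q (n - 1) \<and> tR g \<in> J p q (n - 1) \<and>
   Delta p q (n - 1) (tL g) = Phi p q (2 ^ ((n - 1) div 2)) (Delta p q (n - 1) (tR g))}"
proof -
  assume "3 \<le> n"
  then obtain m where n: "n = Suc (Suc (Suc m))" by (metis Suc_le_D numeral_3_eq_3 Suc_le_mono)
  have e: "3 + m = Suc (Suc (Suc m))" by simp
  show ?thesis unfolding n J.simps autT_def by (simp add: e)
qed

lemma tf_tinv: "tf (tinv x) = tf x"
  by (cases x) auto

lemma J_wf_Nd: "wf_tree (Suc d) x \<Longrightarrow> x = Nd (tf x) (tL x) (tR x)"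
  by (cases x) auto

definition Good :: "int \<Rightarrow> int \<Rightarrow> nat \<Rightarrow> bool" where
 "Good p q n \<longleftrightarrow> (\<forall>x\<in>J p q n. wf_tree n x) \<and> tone n \<in> J p q n \<and>
   (\<forall>x\<in>J p q n. \<forall>y\<in>J p q n. tmul x y \<in> J p q n) \<and> (\<forall>x\<in>J p q n. tinv x \<in> J p q n) \<and>
   (\<forall>x\<in>J p q n. 0 \<le> psi p q n x \<and> psi p q n x < 2^(n div 2)) \<and>
   (\<forall>x\<in>J p q n. \<forall>y\<in>J p q n. psi p q n (tmul x y) = (psi p q n x + psi p q n y) mod 2^(n div 2)) \<and>
   (\<forall>x\<in>J p q n. fst (Delta p q n x) = tf x \<and> 0 \<le> snd (Delta p q n x) \<and> snd (Delta p q n x) < 2^(n div 2)) \<and>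
   (\<forall>x\<in>J p q n. \<forall>y\<in>J p q n. Delta p q n (tmul x y) = dmul (2^(n div 2)) (Delta p q n x) (Delta p q n y))"

lemma GoodD:
  assumes "Good p q n"
  shows Good_wf: "x \<in> J p q n \<Longrightarrow> wf_tree n x"
    and Good_one: "tone n \<in> J p q n"
    and Good_mul: "x \<in> J p q n \<Longrightarrow> y \<in> J p q n \<Longrightarrow> tmul x y \<in> J p q n"
    and Good_inv: "x \<in> J p q n \<Longrightarrow> tinv x \<in> J p q n"
    and Good_psi_ge: "x \<in> J p q n \<Longrightarrow> 0 \<le> psi p q n x"
    and Good_psi_lt: "x \<in> J p q n \<Longrightarrow> psi p q n x < 2^(n div 2)"
    and Good_psi_hom: "x \<in> J p q n \<Longrightarrow> y \<in> J p q n \<Longrightarrow> psi p q n (tmul x y) = (psi p q n x + psi p q n y) mod 2^(n div 2)"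
    and Good_Delta_fst: "x \<in> J p q n \<Longrightarrow> fst (Delta p q n x) = tf x"
    and Good_Delta_ge: "x \<in> J p q n \<Longrightarrow> 0 \<le> snd (Delta p q n x)"
    and Good_Delta_lt: "x \<in> J p q n \<Longrightarrow> snd (Delta p q n x) < 2^(n div 2)"
    and Good_Delta_hom: "x \<in> J p q n \<Longrightarrow> y \<in> J p q n \<Longrightarrow> Delta p q n (tmul x y) = dmul (2^(n div 2)) (Delta p q n x) (Delta p q n y)"
  using assms unfolding Good_def by blast+

lemma Good_Delta_one: assumes "Good p q n" "1 \<le> n" shows "Delta p q n (tone n) = (False, 0)"
proof -
  let ?D = "Delta p q n (tone n)"
  have t: "tone n \<in> J p q n" "wf_tree n (tone n)" using Good_one[OF assms(1)] wf_tone by auto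
  have tf1: "tf (tone n) = False" using assms(2) by (cases n) auto
  have "?D = Delta p q n (tmul (tone n) (tone n))" using tone_left[OF t(2)] by simp
  also have "\<dots> = dmul (2^(n div 2)) ?D ?D" using Good_Delta_hom[OF assms(1) t(1) t(1)] .
  finally have e: "?D = dmul (2^(n div 2)) ?D ?D" .
  have r: "fst ?D = False" "0 \<le> snd ?D" "snd ?D < 2^(n div 2)"
    using Good_Delta_fst[OF assms(1) t(1)] tf1 Good_Delta_ge[OF assms(1) t(1)] Good_Delta_lt[OF assms(1) t(1)] by simp_all
  have "snd ?D = snd (dmul (2^(n div 2)) ?D ?D)" using e by (rule arg_cong)
  also have "\<dots> = (snd ?D + snd ?D) mod 2^(n div 2)" using r(1) by (simp add: dmul_def)
  finally have "(snd ?D + snd ?D) mod 2^(n div 2) = snd ?D" by simp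
  then have "snd ?D = 0" using double_mod_self r by blast
  then show ?thesis using r(1) by (metis prod.collapse)
qed

lemma Good_Delta_inv: assumes "Good p q n" "1 \<le> n" "x \<in> J p q n"
  shows "Delta p q n (tinv x) = dinv (2^(n div 2)) (Delta p q n x)"
proof (rule dinv_unique)
  have w: "wf_tree n x" using Good_wf assms by blast
  have ti: "tinv x \<in> J p q n" using Good_inv assms by blast
  show "0 < (2::int)^(n div 2)" by simp
  show "0 \<le> snd (Delta p q n x)" "snd (Delta p q n x) < 2^(n div 2)"
       "0 \<le> snd (Delta p q n (tinv x))" "snd (Delta p q n (tinv x)) < 2^(n div 2)"
       "fst (Delta p q n (tinv x)) = fst (Delta p q n x)"
    using Good_Delta_fst[OF assms(1)] Good_Delta_ge[OF assms(1)] Good_Delta_lt[OF assms(1)] assms(3) ti by (simp_all add: tf_tinv)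
  have "dmul (2^(n div 2)) (Delta p q n x) (Delta p q n (tinv x)) = Delta p q n (tmul x (tinv x))"
    using Good_Delta_hom[OF assms(1) assms(3) ti] by simp
  also have "\<dots> = (False, 0)" using tinv_right[OF w] Good_Delta_one[OF assms(1,2)] by simp
  finally show "dmul (2^(n div 2)) (Delta p q n x) (Delta p q n (tinv x)) = (False, 0)" .
qed



lemma Phi_dmul2: "Phi p q (2^k) (dmul (2^k) a b) = dmul (2^k) (Phi p q (2^k) a) (Phi p q (2^k) b)"
  using Phi_dmul[of p q "2^k" a b] by simp

lemma Phi_Phi2: "0 \<le> snd a \<Longrightarrow> snd a < 2^k \<Longrightarrow> Phi p q (2^k) (Phi p q (2^k) a) = a"
  using Phi_Phi[of a "2^k" p q] by simp

lemma Phi_dinv2: "Phi p q (2^k) (dinv (2^k) a) = dinv (2^k) (Phi p q (2^k) a)"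
  using Phi_dinv[of p q "2^k" a] by simp

lemma Phi_e: "Phi p q m (False, 0) = (False, 0)"
  by (simp add: Phi_def)

lemma tmul_Nd: "tmul (Nd f A B) (Nd g C D) =
   (if f then Nd (f \<noteq> g) (tmul A D) (tmul B C) else Nd (f \<noteq> g) (tmul A C) (tmul B D))"
  by simp

lemma step_sub:
  assumes G: "Good p q d" and d: "2 \<le> d"
  shows "tone (Suc d) \<in> J p q (Suc d)"
    and "x \<in> J p q (Suc d) \<Longrightarrow> y \<in> J p q (Suc d) \<Longrightarrow> tmul x y \<in> J p q (Suc d)"
    and "x \<in> J p q (Suc d) \<Longrightarrow> tinv x \<in> J p q (Suc d)"
    and "x \<in> J p q (Suc d) \<Longrightarrow> wf_tree (Suc d) x"
proof -
  let ?k = "d div 2"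
  let ?Ph = "Phi p q (2^?k)"
  let ?D = "Delta p q d"
  have JS: "J p q (Suc d) = {g. wf_tree (Suc d) g \<and> tL g \<in> J p q d \<and> tR g \<in> J p q d \<and>
     ?D (tL g) = ?Ph (?D (tR g))}" using J_ge3[of "Suc d" p q] d by simp
  have memI: "Nd f A B \<in> J p q (Suc d)" if "A \<in> J p q d" "B \<in> J p q d" "?D A = ?Ph (?D B)" for f A B
    using that Good_wf[OF G] unfolding JS by auto
  have memD: "\<exists>f A B. x = Nd f A B \<and> A \<in> J p q d \<and> B \<in> J p q d \<and> ?D A = ?Ph (?D B)"
    if "x \<in> J p q (Suc d)" for x
  proof -
    from that have w: "wf_tree (Suc d) x" and r: "tL x \<in> J p q d" "tR x \<in> J p q d" "?D (tL x) = ?Ph (?D (tR x))"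
      unfolding JS by auto
    from w obtain f A B where "x = Nd f A B" by (cases x) auto
    then show ?thesis using r by auto
  qed
  have PP: "?Ph (?Ph (?D A)) = ?D A" if "A \<in> J p q d" for A
    using Phi_Phi2 Good_Delta_ge[OF G that] Good_Delta_lt[OF G that] by blast
  have d1: "1 \<le> d" using d by simp
  show "tone (Suc d) \<in> J p q (Suc d)"
    using memI[OF Good_one[OF G] Good_one[OF G]] Good_Delta_one[OF G d1] Phi_e by simp
  show "x \<in> J p q (Suc d) \<Longrightarrow> wf_tree (Suc d) x" unfolding JS by simp
  show "tmul x y \<in> J p q (Suc d)" if x: "x \<in> J p q (Suc d)" and y: "y \<in> J p q (Suc d)"
  proof -
    obtain f A B where xe: "x = Nd f A B" "A \<in> J p q d" "B \<in> J p q d" "?D A = ?Ph (?D B)" using memD[OF x] by blast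
    obtain g C D where ye: "y = Nd g C D" "C \<in> J p q d" "D \<in> J p q d" "?D C = ?Ph (?D D)" using memD[OF y] by blast
    have DD: "?D D = ?Ph (?D C)" using ye(4) PP[OF ye(3)] by simp
    show ?thesis
    proof (cases f)
      case True
      have "?D (tmul A D) = dmul (2^?k) (?D A) (?D D)" using Good_Delta_hom[OF G xe(2) ye(3)] .
      also have "\<dots> = ?Ph (dmul (2^?k) (?D B) (?D C))" using xe(4) DD Phi_dmul2 by simp
      also have "\<dots> = ?Ph (?D (tmul B C))" using Good_Delta_hom[OF G xe(3) ye(2)] by simp
      finally show ?thesis using True xe ye memI Good_mul[OF G] by simp
    next
      case False
      have "?D (tmul A C) = dmul (2^?k) (?D A) (?D C)" using Good_Delta_hom[OF G xe(2) ye(2)] .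
      also have "\<dots> = ?Ph (dmul (2^?k) (?D B) (?D D))" using xe(4) ye(4) Phi_dmul2 by simp
      also have "\<dots> = ?Ph (?D (tmul B D))" using Good_Delta_hom[OF G xe(3) ye(3)] by simp
      finally show ?thesis using False xe ye memI Good_mul[OF G] by simp
    qed
  qed
  show "tinv x \<in> J p q (Suc d)" if x: "x \<in> J p q (Suc d)"
  proof -
    obtain f A B where xe: "x = Nd f A B" "A \<in> J p q d" "B \<in> J p q d" "?D A = ?Ph (?D B)" using memD[OF x] by blast
    have BB: "?D B = ?Ph (?D A)" using xe(4) PP[OF xe(3)] by simp
    show ?thesis
    proof (cases f)
      case True
      have "?D (tinv B) = dinv (2^?k) (?D B)" using Good_Delta_inv[OF G d1 xe(3)] .
      also have "\<dots> = ?Ph (dinv (2^?k) (?D A))" using BB Phi_dinv2 by simp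
      also have "\<dots> = ?Ph (?D (tinv A))" using Good_Delta_inv[OF G d1 xe(2)] by simp
      finally show ?thesis using True xe memI Good_inv[OF G] by simp
    next
      case False
      have "?D (tinv A) = dinv (2^?k) (?D A)" using Good_Delta_inv[OF G d1 xe(2)] .
      also have "\<dots> = ?Ph (dinv (2^?k) (?D B))" using xe(4) Phi_dinv2 by simp
      also have "\<dots> = ?Ph (?D (tinv B))" using Good_Delta_inv[OF G d1 xe(3)] by simp
      finally show ?thesis using False xe memI Good_inv[OF G] by simp
    qed
  qed
qed



definition cg :: "int \<Rightarrow> int \<Rightarrow> int \<Rightarrow> bool" where
  "cg K a b \<longleftrightarrow> K dvd (a - b)"

lemma cg_iff: "cg K a b \<longleftrightarrow> a mod K = b mod K"
  by (simp add: cg_def mod_eq_dvd_iff)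
lemma cg_refl[simp]: "cg K a a" by (simp add: cg_def)
lemma cg_eq: "a = b \<Longrightarrow> cg K a b" by simp
lemma cg_sym: "cg K a b \<Longrightarrow> cg K b a" by (simp add: cg_iff)
lemma cg_trans[trans]: "cg K a b \<Longrightarrow> cg K b c \<Longrightarrow> cg K a c" by (simp add: cg_iff)
lemma cg_eq_trans[trans]: "a = b \<Longrightarrow> cg K b c \<Longrightarrow> cg K a c" by simp
lemma cg_trans_eq[trans]: "cg K a b \<Longrightarrow> b = c \<Longrightarrow> cg K a c" by simp
lemma cg_add: "cg K a b \<Longrightarrow> cg K c d \<Longrightarrow> cg K (a + c) (b + d)"
proof -
  assume "cg K a b" "cg K c d"
  then have "K dvd ((a - b) + (c - d))" unfolding cg_def by (rule dvd_add)
  moreover have "(a - b) + (c - d) = (a + c) - (b + d)" by simp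
  ultimately show ?thesis unfolding cg_def by simp
qed
lemma cg_diff: "cg K a b \<Longrightarrow> cg K c d \<Longrightarrow> cg K (a - c) (b - d)"
proof -
  assume "cg K a b" "cg K c d"
  then have "K dvd ((a - b) - (c - d))" unfolding cg_def by (rule dvd_diff)
  moreover have "(a - b) - (c - d) = (a - c) - (b - d)" by simp
  ultimately show ?thesis unfolding cg_def by simp
qed
lemma cg_mult: "cg K a b \<Longrightarrow> cg K (c * a) (c * b)"
proof -
  assume "cg K a b"
  then have "K dvd c * (a - b)" unfolding cg_def by (rule dvd_mult)
  moreover have "c * (a - b) = c * a - c * b" by (simp add: algebra_simps)
  ultimately show ?thesis unfolding cg_def by simp
qed
lemma cg_mod: "cg K (a mod K) a" by (simp add: cg_iff)
lemma cg_double: "cg K a b \<Longrightarrow> cg (2 * K) (2 * a) (2 * b)"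
proof -
  assume "cg K a b"
  then have "2 * K dvd 2 * (a - b)" unfolding cg_def by (rule mult_dvd_mono[OF dvd_refl])
  moreover have "2 * (a - b) = 2 * a - 2 * b" by (simp add: algebra_simps)
  ultimately show ?thesis unfolding cg_def by simp
qed
lemma cg_down: "cg (2 * K) a b \<Longrightarrow> cg K a b"
proof -
  assume "cg (2 * K) a b"
  then have "2 * K dvd a - b" unfolding cg_def .
  moreover have "K dvd 2 * K" by simp
  ultimately show ?thesis unfolding cg_def using dvd_trans by blast
qed
lemma cg_cancel: "odd (s::int) \<Longrightarrow> cg (2^k) (s * a) (s * b) \<Longrightarrow> cg (2^k) a b"
  unfolding cg_iff by (rule odd_cancel)
lemma cg_range_eq: "cg K a b \<Longrightarrow> 0 \<le> a \<Longrightarrow> a < K \<Longrightarrow> 0 \<le> b \<Longrightarrow> b < K \<Longrightarrow> a = b"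
  unfolding cg_iff by simp

lemma zdiv_cg: "odd (d::int) \<Longrightarrow> cg (2^k) (d * zdiv k a d) a"
  using zdiv_props[of d k a] by (simp add: cg_iff)
lemma zdiv_eqI: "odd (d::int) \<Longrightarrow> 0 \<le> y \<Longrightarrow> y < 2^k \<Longrightarrow> cg (2^k) (d * y) a \<Longrightarrow> zdiv k a d = y"
  using zdiv_eq_iff[of d y k a] by (simp add: cg_iff)

lemma J_mem_ge3: assumes "x \<in> J p q n" "3 \<le> n"
  shows "\<exists>f A B. x = Nd f A B \<and> A \<in> J p q (n - 1) \<and> B \<in> J p q (n - 1) \<and>
     Delta p q (n - 1) A = Phi p q (2 ^ ((n - 1) div 2)) (Delta p q (n - 1) B)"
proof -
  from assms have w: "wf_tree n x" and r: "tL x \<in> J p q (n - 1)" "tR x \<in> J p q (n - 1)"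
     "Delta p q (n - 1) (tL x) = Phi p q (2 ^ ((n - 1) div 2)) (Delta p q (n - 1) (tR x))"
    using J_ge3[OF assms(2)] by auto
  from w assms(2) obtain f A B where "x = Nd f A B" by (cases x; cases n) auto
  then show ?thesis using r by auto
qed

lemma step_odd:
  assumes G: "Good p q d" and d: "2 \<le> d" "even d" and s: "odd (p + q)"
  shows "x \<in> J p q (Suc d) \<Longrightarrow> 0 \<le> psi p q (Suc d) x \<and> psi p q (Suc d) x < 2^(Suc d div 2)"
    and "x \<in> J p q (Suc d) \<Longrightarrow> y \<in> J p q (Suc d) \<Longrightarrow>
           psi p q (Suc d) (tmul x y) = (psi p q (Suc d) x + psi p q (Suc d) y) mod 2^(Suc d div 2)"
    and "x \<in> J p q (Suc d) \<Longrightarrow> fst (Delta p q (Suc d) x) = tf x \<and> 0 \<le> snd (Delta p q (Suc d) x) \<and>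
           snd (Delta p q (Suc d) x) < 2^(Suc d div 2)"
    and "x \<in> J p q (Suc d) \<Longrightarrow> y \<in> J p q (Suc d) \<Longrightarrow>
           Delta p q (Suc d) (tmul x y) = dmul (2^(Suc d div 2)) (Delta p q (Suc d) x) (Delta p q (Suc d) y)"
proof -
  let ?k = "d div 2"
  let ?K = "(2::int)^?k"
  let ?s = "p + q"
  let ?P = "psi p q d"
  let ?n = "Suc d"
  have hk: "Suc d div 2 = d div 2" using d by simp
  have n3: "3 \<le> Suc d" "odd (Suc d)" using d by auto
  have psiN: "psi p q ?n g = zdiv ?k (?P (tL g) + ?P (tR g)) ?s" for g
    using psi_odd[OF n3, of p q g] hk by simp
  have DeltaN: "Delta p q ?n g = (tf g, (?P (tL g) - ?P (tR g)) mod ?K)" for g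
    using Delta_odd[OF n3, of p q g] hk by simp
  have mem: "\<exists>f A B. x = Nd f A B \<and> A \<in> J p q d \<and> B \<in> J p q d" if "x \<in> J p q ?n" for x
    using J_mem_ge3[OF that n3(1)] by auto
  show "0 \<le> psi p q ?n x \<and> psi p q ?n x < 2^(?n div 2)" for x
    using zdiv_props[OF s] psiN hk by simp
  show "fst (Delta p q ?n x) = tf x \<and> 0 \<le> snd (Delta p q ?n x) \<and> snd (Delta p q ?n x) < 2^(?n div 2)" for x
    using DeltaN hk by simp
  fix x y assume x: "x \<in> J p q ?n" and y: "y \<in> J p q ?n"
  obtain f A B where xe: "x = Nd f A B" "A \<in> J p q d" "B \<in> J p q d" using mem[OF x] by blast
  obtain g C D where ye: "y = Nd g C D" "C \<in> J p q d" "D \<in> J p q d" using mem[OF y] by blast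
  have hom: "?P (tmul U V) = (?P U + ?P V) mod ?K" if "U \<in> J p q d" "V \<in> J p q d" for U V
    using Good_psi_hom[OF G that] .
  let ?X = "psi p q ?n x" and ?Y = "psi p q ?n y"
  have hX: "cg ?K (?s * ?X) (?P A + ?P B)" using zdiv_cg[OF s] psiN xe(1) by simp
  have hY: "cg ?K (?s * ?Y) (?P C + ?P D)" using zdiv_cg[OF s] psiN ye(1) by simp
  define L where "L = (if f then tmul A D else tmul A C)"
  define R where "R = (if f then tmul B C else tmul B D)"
  have xy: "tmul x y = Nd (f \<noteq> g) L R" using xe ye by (simp add: L_def R_def)
  have LR: "cg ?K (?P L + ?P R) (?P A + ?P B + (?P C + ?P D))"
  proof (cases f)
    case True
    have "cg ?K (?P L + ?P R) ((?P A + ?P D) + (?P B + ?P C))"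
      unfolding L_def R_def using True hom xe ye by (intro cg_add) (simp_all add: cg_mod)
    then show ?thesis by (simp add: algebra_simps)
  next
    case False
    have "cg ?K (?P L + ?P R) ((?P A + ?P C) + (?P B + ?P D))"
      unfolding L_def R_def using False hom xe ye by (intro cg_add) (simp_all add: cg_mod)
    then show ?thesis by (simp add: algebra_simps)
  qed
  show "psi p q ?n (tmul x y) = (?X + ?Y) mod 2^(?n div 2)"
  proof -
    have "psi p q ?n (tmul x y) = zdiv ?k (?P L + ?P R) ?s" using psiN xy by simp
    also have "\<dots> = (?X + ?Y) mod ?K"
    proof (rule zdiv_eqI[OF s])
      show "0 \<le> (?X + ?Y) mod ?K" "(?X + ?Y) mod ?K < ?K" by simp_all
      have "cg ?K (?s * ((?X + ?Y) mod ?K)) (?s * (?X + ?Y))" by (intro cg_mult cg_mod)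
      also have "?s * (?X + ?Y) = ?s * ?X + ?s * ?Y" by (simp add: algebra_simps)
      also have "cg ?K \<dots> (?P A + ?P B + (?P C + ?P D))" using hX hY by (rule cg_add)
      also have "cg ?K \<dots> (?P L + ?P R)" using LR by (rule cg_sym)
      finally show "cg ?K (?s * ((?X + ?Y) mod ?K)) (?P L + ?P R)" .
    qed
    finally show ?thesis using hk by simp
  qed
  show "Delta p q ?n (tmul x y) = dmul (2^(?n div 2)) (Delta p q ?n x) (Delta p q ?n y)"
  proof -
    have "cg ?K (?P L - ?P R) (if f then (?P A - ?P B) - (?P C - ?P D) else (?P A - ?P B) + (?P C - ?P D))"
    proof (cases f)
      case True
      have "cg ?K (?P L - ?P R) ((?P A + ?P D) - (?P B + ?P C))"
        unfolding L_def R_def using True hom xe ye by (intro cg_diff) (simp_all add: cg_mod)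
      then show ?thesis using True by (simp add: algebra_simps)
    next
      case False
      have "cg ?K (?P L - ?P R) ((?P A + ?P C) - (?P B + ?P D))"
        unfolding L_def R_def using False hom xe ye by (intro cg_diff) (simp_all add: cg_mod)
      then show ?thesis using False by (simp add: algebra_simps)
    qed
    note c1 = this
    let ?a = "?P A - ?P B" and ?c = "?P C - ?P D"
    have c2: "cg ?K (?a mod ?K + (if f then - (?c mod ?K) else ?c mod ?K)) (if f then ?a - ?c else ?a + ?c)"
    proof (cases f)
      case True
      have "cg ?K (?a mod ?K - ?c mod ?K) (?a - ?c)" by (intro cg_diff cg_mod)
      then show ?thesis using True by simp
    next
      case False
      have "cg ?K (?a mod ?K + ?c mod ?K) (?a + ?c)" by (intro cg_add cg_mod)
      then show ?thesis using False by simp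
    qed
    have s1: "snd (Delta p q ?n (tmul x y)) = (?P L - ?P R) mod ?K" by (simp add: DeltaN xy)
    have s2: "snd (dmul (2^(?n div 2)) (Delta p q ?n x) (Delta p q ?n y)) =
        (?a mod ?K + (if f then - (?c mod ?K) else ?c mod ?K)) mod ?K"
      by (simp add: dmul_def DeltaN xe(1) ye(1) hk)
    have "cg ?K (?P L - ?P R) (?a mod ?K + (if f then - (?c mod ?K) else ?c mod ?K))"
      using cg_trans[OF c1 cg_sym[OF c2]] .
    then have s3: "snd (Delta p q ?n (tmul x y)) = snd (dmul (2^(?n div 2)) (Delta p q ?n x) (Delta p q ?n y))"
      unfolding s1 s2 cg_iff .
    have f3: "fst (Delta p q ?n (tmul x y)) = fst (dmul (2^(?n div 2)) (Delta p q ?n x) (Delta p q ?n y))"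
    proof -
      have "fst (Delta p q ?n (tmul x y)) = (f \<noteq> g)" unfolding DeltaN xy by simp
      moreover have "fst (Delta p q ?n x) = f" "fst (Delta p q ?n y) = g" unfolding DeltaN xe(1) ye(1) by simp_all
      ultimately show ?thesis unfolding dmul_def by simp
    qed
    show ?thesis using s3 f3 by (rule prod_eqI[rotated])
  qed
qed



lemma keyJ:
  assumes y: "y \<in> J p q (Suc d)" and d: "3 \<le> d" "odd d"
  shows "\<exists>g c C1 C2 D1 D2. y = Nd g (Nd c C1 C2) (Nd c D1 D2) \<and>
     Nd c C1 C2 \<in> J p q d \<and> Nd c D1 D2 \<in> J p q d \<and>
     C1 \<in> J p q (d - 1) \<and> C2 \<in> J p q (d - 1) \<and> D1 \<in> J p q (d - 1) \<and> D2 \<in> J p q (d - 1) \<and>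
     cg (2^(d div 2)) (psi p q (d - 1) C1 - psi p q (d - 1) C2 + (psi p q (d - 1) D1 - psi p q (d - 1) D2))
        (if c then (p + q) * (p - q) else 0)"
proof -
  let ?e = "d - 1"
  let ?K = "(2::int)^(d div 2)"
  let ?P = "psi p q ?e"
  have n3: "3 \<le> Suc d" using d by simp
  obtain g C D where ye: "y = Nd g C D" "C \<in> J p q d" "D \<in> J p q d"
     "Delta p q d C = Phi p q (2 ^ (d div 2)) (Delta p q d D)"
    using J_mem_ge3[OF y n3] by auto
  obtain c C1 C2 where ce: "C = Nd c C1 C2" "C1 \<in> J p q ?e" "C2 \<in> J p q ?e"
    using J_mem_ge3[OF ye(2) d(1)] by auto
  obtain c' D1 D2 where de: "D = Nd c' D1 D2" "D1 \<in> J p q ?e" "D2 \<in> J p q ?e"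
    using J_mem_ge3[OF ye(3) d(1)] by auto
  have DC: "Delta p q d C = (c, (?P C1 - ?P C2) mod ?K)" using Delta_odd[OF d] ce(1) by simp
  have DD: "Delta p q d D = (c', (?P D1 - ?P D2) mod ?K)" using Delta_odd[OF d] de(1) by simp
  have "(c, (?P C1 - ?P C2) mod ?K) = (c', ((if c' then (p + q) * (p - q) else 0) - (?P D1 - ?P D2) mod ?K) mod ?K)"
    using ye(4) unfolding DC DD Phi_def by simp
  then have cc: "c' = c" and m: "(?P C1 - ?P C2) mod ?K = ((if c then (p + q) * (p - q) else 0) - (?P D1 - ?P D2) mod ?K) mod ?K"
    by auto
  have "cg ?K (?P C1 - ?P C2) ((if c then (p + q) * (p - q) else 0) - (?P D1 - ?P D2) mod ?K)"
    using m by (simp add: cg_iff)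
  also have "cg ?K \<dots> ((if c then (p + q) * (p - q) else 0) - (?P D1 - ?P D2))"
    by (intro cg_diff cg_refl cg_mod)
  finally have "cg ?K (?P C1 - ?P C2 + (?P D1 - ?P D2)) ((if c then (p + q) * (p - q) else 0) - (?P D1 - ?P D2) + (?P D1 - ?P D2))"
    by (intro cg_add cg_refl)
  then have "cg ?K (?P C1 - ?P C2 + (?P D1 - ?P D2)) (if c then (p + q) * (p - q) else 0)" by simp
  then show ?thesis using ye ce de cc by blast
qed

lemma even_arith:
  fixes K S A1 B1 C1 C2 D1 D2 cc :: int
  assumes h1: "cg K S (A1 + B1 + (if a then C2 + D2 else C1 + D1))"
    and h2: "cg K (C1 - C2 + (D1 - D2)) (if c then cc else 0)"
  shows "cg (2 * K) ((2 * (A1 + B1) - (if a then cc else 0)) + (2 * (C1 + D1) - (if c then cc else 0)))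
                    (2 * S - (if a \<noteq> c then cc else 0))"
proof -
  obtain t1 where t1: "S - (A1 + B1 + (if a then C2 + D2 else C1 + D1)) = K * t1" using h1 unfolding cg_def by blast
  obtain t2 where t2: "(C1 - C2 + (D1 - D2)) - (if c then cc else 0) = K * t2" using h2 unfolding cg_def by blast
  have S: "S = A1 + B1 + (if a then C2 + D2 else C1 + D1) + K * t1" using t1 by simp
  have C1: "C1 = C2 - (D1 - D2) + (if c then cc else 0) + K * t2" using t2 by simp
  have "((2 * (A1 + B1) - (if a then cc else 0)) + (2 * (C1 + D1) - (if c then cc else 0)))
        - (2 * S - (if a \<noteq> c then cc else 0)) = (2 * K) * (if a then t2 - t1 else - t1)"
    unfolding S by (cases a; cases c) (simp_all add: C1 algebra_simps)
  then show ?thesis unfolding cg_def by (metis dvd_triv_left)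
qed



lemma step_even:
  assumes G: "Good p q d" and G2: "Good p q (d - 1)" and d: "3 \<le> d" "odd d" and s: "odd (p + q)"
  shows "x \<in> J p q (Suc d) \<Longrightarrow> 0 \<le> psi p q (Suc d) x \<and> psi p q (Suc d) x < 2^(Suc d div 2)"
    and "x \<in> J p q (Suc d) \<Longrightarrow> y \<in> J p q (Suc d) \<Longrightarrow>
           psi p q (Suc d) (tmul x y) = (psi p q (Suc d) x + psi p q (Suc d) y) mod 2^(Suc d div 2)"
    and "x \<in> J p q (Suc d) \<Longrightarrow> fst (Delta p q (Suc d) x) = tf x \<and> 0 \<le> snd (Delta p q (Suc d) x) \<and>
           snd (Delta p q (Suc d) x) < 2^(Suc d div 2)"
    and "x \<in> J p q (Suc d) \<Longrightarrow> y \<in> J p q (Suc d) \<Longrightarrow>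
           Delta p q (Suc d) (tmul x y) = dmul (2^(Suc d div 2)) (Delta p q (Suc d) x) (Delta p q (Suc d) y)"
proof -
  let ?e = "d - 1"
  let ?k = "Suc d div 2"
  let ?K' = "(2::int)^(d div 2)"
  let ?K = "(2::int)^(Suc d div 2)"
  let ?s = "p + q"
  let ?cc = "(p + q) * (p - q)"
  let ?P = "psi p q ?e"
  let ?Q = "psi p q d"
  let ?n = "Suc d"
  have KK: "?K = 2 * ?K'" using d by simp
  have ek: "?e div 2 = d div 2" using d by presburger
  have n4: "4 \<le> Suc d" "even (Suc d)" using d by auto
  have s2: "odd (?s^2)" using s by simp
  have psiN: "psi p q ?n g = zdiv ?k (2 * (?P (tL (tL g)) + ?P (tL (tR g))) - (if tf (tL g) then ?cc else 0)) (?s^2)" for g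
    using psi_even[OF n4, of p q g] by simp
  have DeltaN: "Delta p q ?n g = (tf g, (?s * psi p q ?n g - 2 * ?Q (tR g)) mod ?K)" for g
    using Delta_even[OF n4, of p q g] by simp
  have psiD: "cg ?K' (?s * ?Q (Nd a X1 X2)) (?P X1 + ?P X2)" for a X1 X2
    using zdiv_cg[OF s, of "d div 2"] psi_odd[OF d, of p q "Nd a X1 X2"] by simp
  have homP: "?P (tmul U V) = (?P U + ?P V) mod ?K'" if "U \<in> J p q ?e" "V \<in> J p q ?e" for U V
    using Good_psi_hom[OF G2 that] ek by simp
  have homQ: "?Q (tmul U V) = (?Q U + ?Q V) mod ?K'" if "U \<in> J p q d" "V \<in> J p q d" for U V
    using Good_psi_hom[OF G that] by simp
  show "0 \<le> psi p q ?n x \<and> psi p q ?n x < 2^(?n div 2)" for x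
    using zdiv_props[OF s2] psiN by simp
  show "fst (Delta p q ?n x) = tf x \<and> 0 \<le> snd (Delta p q ?n x) \<and> snd (Delta p q ?n x) < 2^(?n div 2)" for x
    using DeltaN by simp
  have psiC: "cg ?K (?s^2 * psi p q ?n (Nd f (Nd a A1 A2) (Nd b B1 B2))) (2 * (?P A1 + ?P B1) - (if a then ?cc else 0))"
    for f a b A1 A2 B1 B2
    using zdiv_cg[OF s2, of ?k] psiN[of "Nd f (Nd a A1 A2) (Nd b B1 B2)"] by simp
  have keyY: "cg ?K' (?s * psi p q ?n (Nd g (Nd c C1 C2) (Nd c D1 D2))) (?Q (Nd c C1 C2) + ?Q (Nd c D1 D2))"
    if "cg ?K' (?P C1 - ?P C2 + (?P D1 - ?P D2)) (if c then ?cc else 0)" for g c C1 C2 D1 D2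
  proof (rule cg_cancel[OF s])
    let ?Y = "psi p q ?n (Nd g (Nd c C1 C2) (Nd c D1 D2))"
    have "?s * (?s * ?Y) = ?s^2 * ?Y" by (simp add: power2_eq_square)
    also have "cg ?K' \<dots> (2 * (?P C1 + ?P D1) - (if c then ?cc else 0))"
      using cg_down[OF psiC[of g c C1 C2 c D1 D2, unfolded KK]] by simp
    also have "2 * (?P C1 + ?P D1) - (if c then ?cc else 0) =
       (?P C1 + ?P C2) + (?P D1 + ?P D2) + ((?P C1 - ?P C2 + (?P D1 - ?P D2)) - (if c then ?cc else 0))"
      by (simp add: algebra_simps)
    also have "cg ?K' \<dots> ((?P C1 + ?P C2) + (?P D1 + ?P D2) + ((if c then ?cc else 0) - (if c then ?cc else 0)))"
      by (intro cg_add cg_diff cg_refl that)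
    also have "\<dots> = (?P C1 + ?P C2) + (?P D1 + ?P D2)" by simp
    also have "cg ?K' \<dots> (?s * ?Q (Nd c C1 C2) + ?s * ?Q (Nd c D1 D2))"
      by (intro cg_add; rule cg_sym; rule psiD)
    also have "\<dots> = ?s * (?Q (Nd c C1 C2) + ?Q (Nd c D1 D2))" by (simp add: algebra_simps)
    finally show "cg (2 ^ (d div 2)) (?s * (?s * ?Y)) (?s * (?Q (Nd c C1 C2) + ?Q (Nd c D1 D2)))" .
  qed
  fix x y assume x: "x \<in> J p q ?n" and y: "y \<in> J p q ?n"
  obtain f a A1 A2 B1 B2 where xe: "x = Nd f (Nd a A1 A2) (Nd a B1 B2)" "Nd a A1 A2 \<in> J p q d" "Nd a B1 B2 \<in> J p q d"
    "A1 \<in> J p q ?e" "A2 \<in> J p q ?e" "B1 \<in> J p q ?e" "B2 \<in> J p q ?e"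
    "cg ?K' (?P A1 - ?P A2 + (?P B1 - ?P B2)) (if a then ?cc else 0)"
    using keyJ[OF x d] by blast
  obtain g c C1 C2 D1 D2 where ye: "y = Nd g (Nd c C1 C2) (Nd c D1 D2)" "Nd c C1 C2 \<in> J p q d" "Nd c D1 D2 \<in> J p q d"
    "C1 \<in> J p q ?e" "C2 \<in> J p q ?e" "D1 \<in> J p q ?e" "D2 \<in> J p q ?e"
    "cg ?K' (?P C1 - ?P C2 + (?P D1 - ?P D2)) (if c then ?cc else 0)"
    using keyJ[OF y d] by blast
  let ?A = "Nd a A1 A2" and ?B = "Nd a B1 B2" and ?C = "Nd c C1 C2" and ?D = "Nd c D1 D2"
  define L where "L = (if f then tmul ?A ?D else tmul ?A ?C)"
  define R where "R = (if f then tmul ?B ?C else tmul ?B ?D)"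
  have xy: "tmul x y = Nd (f \<noteq> g) L R" using xe ye by (simp add: L_def R_def)
  have tfL: "tf L = (a \<noteq> c)" by (simp add: L_def)
  have S: "cg ?K' (?P (tL L) + ?P (tL R)) (?P A1 + ?P B1 + (if a then ?P C2 + ?P D2 else ?P C1 + ?P D1))"
  proof (cases f; cases a)
    assume "f" "a"
    then have "cg ?K' (?P (tL L) + ?P (tL R)) ((?P A1 + ?P D2) + (?P B1 + ?P C2))"
      unfolding L_def R_def using homP xe ye by (intro cg_add) (simp_all add: cg_mod)
    then show ?thesis using `a` by (simp add: algebra_simps)
  next
    assume "f" "\<not> a"
    then have "cg ?K' (?P (tL L) + ?P (tL R)) ((?P A1 + ?P D1) + (?P B1 + ?P C1))"
      unfolding L_def R_def using homP xe ye by (intro cg_add) (simp_all add: cg_mod)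
    then show ?thesis using `\<not> a` by (simp add: algebra_simps)
  next
    assume "\<not> f" "a"
    then have "cg ?K' (?P (tL L) + ?P (tL R)) ((?P A1 + ?P C2) + (?P B1 + ?P D2))"
      unfolding L_def R_def using homP xe ye by (intro cg_add) (simp_all add: cg_mod)
    then show ?thesis using `a` by (simp add: algebra_simps)
  next
    assume "\<not> f" "\<not> a"
    then have "cg ?K' (?P (tL L) + ?P (tL R)) ((?P A1 + ?P C1) + (?P B1 + ?P D1))"
      unfolding L_def R_def using homP xe ye by (intro cg_add) (simp_all add: cg_mod)
    then show ?thesis using `\<not> a` by (simp add: algebra_simps)
  qed
  let ?X = "psi p q ?n x" and ?Y = "psi p q ?n y"
  have hX: "cg ?K (?s^2 * ?X) (2 * (?P A1 + ?P B1) - (if a then ?cc else 0))" using psiC xe(1) by simp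
  have hY: "cg ?K (?s^2 * ?Y) (2 * (?P C1 + ?P D1) - (if c then ?cc else 0))" using psiC ye(1) by simp
  have psixy: "psi p q ?n (tmul x y) = (?X + ?Y) mod ?K"
  proof -
    have "psi p q ?n (tmul x y) = zdiv ?k (2 * (?P (tL L) + ?P (tL R)) - (if a \<noteq> c then ?cc else 0)) (?s^2)"
      using psiN xy tfL by simp
    also have "\<dots> = (?X + ?Y) mod ?K"
    proof (rule zdiv_eqI[OF s2])
      show "0 \<le> (?X + ?Y) mod ?K" "(?X + ?Y) mod ?K < ?K" by simp_all
      have "cg ?K (?s^2 * ((?X + ?Y) mod ?K)) (?s^2 * (?X + ?Y))" by (intro cg_mult cg_mod)
      also have "?s^2 * (?X + ?Y) = ?s^2 * ?X + ?s^2 * ?Y" by (simp add: algebra_simps)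
      also have "cg ?K \<dots> ((2 * (?P A1 + ?P B1) - (if a then ?cc else 0)) + (2 * (?P C1 + ?P D1) - (if c then ?cc else 0)))"
        using hX hY by (rule cg_add)
      also have "cg ?K \<dots> (2 * (?P (tL L) + ?P (tL R)) - (if a \<noteq> c then ?cc else 0))"
        using even_arith[OF S ye(8)] KK by simp
      finally show "cg ?K (?s^2 * ((?X + ?Y) mod ?K)) (2 * (?P (tL L) + ?P (tL R)) - (if a \<noteq> c then ?cc else 0))" .
    qed
    finally show ?thesis .
  qed
  show "psi p q ?n (tmul x y) = (?X + ?Y) mod 2^(?n div 2)" using psixy by simp
  show "Delta p q ?n (tmul x y) = dmul (2^(?n div 2)) (Delta p q ?n x) (Delta p q ?n y)"
  proof -
    have kY: "cg ?K' (?s * ?Y) (?Q ?C + ?Q ?D)" using keyY[OF ye(8)] ye(1) by simp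
    let ?a = "?s * ?X - 2 * ?Q ?B" and ?c = "?s * ?Y - 2 * ?Q ?D"
    have QR: "?Q R = (?Q ?B + ?Q (if f then ?C else ?D)) mod ?K'"
    proof (cases f)
      case True
      have "R = tmul ?B ?C" unfolding R_def using True by (simp only: if_True)
      then show ?thesis using True homQ[OF xe(3) ye(2)] by (simp only: if_True)
    next
      case False
      have "R = tmul ?B ?D" unfolding R_def using False by (simp only: if_False)
      then show ?thesis using False homQ[OF xe(3) ye(3)] by (simp only: if_False)
    qed
    have c1: "cg ?K (?s * ((?X + ?Y) mod ?K) - 2 * ?Q R) (if f then ?a - ?c else ?a + ?c)"
    proof -
      have "cg ?K (?s * ((?X + ?Y) mod ?K) - 2 * ?Q R) (?s * (?X + ?Y) - 2 * (?Q ?B + ?Q (if f then ?C else ?D)))"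
        unfolding QR KK by (intro cg_diff cg_mult cg_mod cg_double)
      also have "?s * (?X + ?Y) - 2 * (?Q ?B + ?Q (if f then ?C else ?D)) =
          ?a + ?c + (if f then 2 * (?Q ?D - ?Q ?C) else 0)" by (simp add: algebra_simps)
      also have "cg ?K \<dots> (?a + ?c + (if f then 2 * (?Q ?D - ?Q ?C) - 2 * (?s * ?Y - (?Q ?C + ?Q ?D)) else 0))"
      proof (cases f)
        case True
        have "cg (2 * ?K') (2 * (?s * ?Y - (?Q ?C + ?Q ?D))) (2 * 0)"
          using kY by (intro cg_double) (simp add: cg_def)
        then have h2: "2 * ?K' dvd (2 * (?s * ?Y - (?Q ?C + ?Q ?D)) - 2 * 0)" unfolding cg_def .
        have eq: "(?a + ?c + 2 * (?Q ?D - ?Q ?C)) - (?a + ?c + (2 * (?Q ?D - ?Q ?C) - 2 * (?s * ?Y - (?Q ?C + ?Q ?D))))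
             = 2 * (?s * ?Y - (?Q ?C + ?Q ?D)) - 2 * 0" by (simp add: algebra_simps)
        have "cg ?K (?a + ?c + 2 * (?Q ?D - ?Q ?C)) (?a + ?c + (2 * (?Q ?D - ?Q ?C) - 2 * (?s * ?Y - (?Q ?C + ?Q ?D))))"
          unfolding cg_def eq KK using h2 .
        then show ?thesis using True by (simp only: if_True)
      qed simp
      also have "(?a + ?c + (if f then 2 * (?Q ?D - ?Q ?C) - 2 * (?s * ?Y - (?Q ?C + ?Q ?D)) else 0)) =
          (if f then ?a - ?c else ?a + ?c)" by (simp add: algebra_simps)
      finally show ?thesis .
    qed
    have c2: "cg ?K (?a mod ?K + (if f then - (?c mod ?K) else ?c mod ?K)) (if f then ?a - ?c else ?a + ?c)"
    proof (cases f)
      case True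
      have "cg ?K (?a mod ?K - ?c mod ?K) (?a - ?c)" by (intro cg_diff cg_mod)
      then show ?thesis using True by simp
    next
      case False
      have "cg ?K (?a mod ?K + ?c mod ?K) (?a + ?c)" by (intro cg_add cg_mod)
      then show ?thesis using False by simp
    qed
    have s1: "snd (Delta p q ?n (tmul x y)) = (?s * ((?X + ?Y) mod ?K) - 2 * ?Q R) mod ?K"
    proof -
      have "snd (Delta p q ?n (tmul x y)) = (?s * psi p q ?n (tmul x y) - 2 * ?Q (tR (tmul x y))) mod ?K"
        by (simp only: DeltaN snd_conv)
      also have "tR (tmul x y) = R" using xy by simp
      finally show ?thesis unfolding psixy .
    qed
    have s2': "snd (dmul (2^(?n div 2)) (Delta p q ?n x) (Delta p q ?n y)) =
        (?a mod ?K + (if f then - (?c mod ?K) else ?c mod ?K)) mod ?K"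
    proof -
      have "fst (Delta p q ?n x) = f" "snd (Delta p q ?n x) = ?a mod ?K" "snd (Delta p q ?n y) = ?c mod ?K"
        unfolding DeltaN xe(1) ye(1) by simp_all
      then show ?thesis unfolding dmul_def by simp
    qed
    have "cg ?K (?s * ((?X + ?Y) mod ?K) - 2 * ?Q R) (?a mod ?K + (if f then - (?c mod ?K) else ?c mod ?K))"
      using cg_trans[OF c1 cg_sym[OF c2]] .
    then have s3: "snd (Delta p q ?n (tmul x y)) = snd (dmul (2^(?n div 2)) (Delta p q ?n x) (Delta p q ?n y))"
      unfolding s1 s2' cg_iff .
    have f3: "fst (Delta p q ?n (tmul x y)) = fst (dmul (2^(?n div 2)) (Delta p q ?n x) (Delta p q ?n y))"
    proof -
      have "fst (Delta p q ?n (tmul x y)) = (f \<noteq> g)" unfolding DeltaN xy by simp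
      moreover have "fst (Delta p q ?n x) = f" "fst (Delta p q ?n y) = g" unfolding DeltaN xe(1) ye(1) by simp_all
      ultimately show ?thesis unfolding dmul_def by simp
    qed
    show ?thesis using s3 f3 by (rule prod_eqI[rotated])
  qed
qed



lemma wf1E: "wf_tree 1 x \<Longrightarrow> x = Nd (tf x) Lf Lf"
  by (cases x) (auto simp: numeral_eq_Suc)

lemma J1_iff: "x \<in> J p q 1 \<longleftrightarrow> (\<exists>f. x = Nd f Lf Lf)"
proof
  assume "x \<in> J p q 1"
  then have "wf_tree 1 x" unfolding J_1 by simp
  then show "\<exists>f. x = Nd f Lf Lf" using wf1E by blast
next
  assume "\<exists>f. x = Nd f Lf Lf"
  then show "x \<in> J p q 1" unfolding J_1 by auto
qed

lemma Good_1: "Good p q 1"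
proof -
  have P: "psi p q 1 x = 0" for x by (simp add: psi_le1)
  have D: "Delta p q 1 x = (tf x, 0)" for x by (rule Delta_1)
  show ?thesis unfolding Good_def
  proof (intro conjI ballI)
    fix x assume x: "x \<in> J p q 1"
    then obtain f where xe: "x = Nd f Lf Lf" using J1_iff by blast
    show "wf_tree 1 x" by (simp add: xe)
    show "tinv x \<in> J p q 1" unfolding J1_iff xe by simp
    show "0 \<le> psi p q 1 x" "psi p q 1 x < 2 ^ (1 div 2)" unfolding P by simp_all
    show "fst (Delta p q 1 x) = tf x" "0 \<le> snd (Delta p q 1 x)" "snd (Delta p q 1 x) < 2 ^ (1 div 2)"
      unfolding D by simp_all
    fix y assume y: "y \<in> J p q 1"
    then obtain g where ye: "y = Nd g Lf Lf" using J1_iff by blast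
    have xy: "tmul x y = Nd (f \<noteq> g) Lf Lf" by (simp add: xe ye)
    show "tmul x y \<in> J p q 1" unfolding J1_iff xy by blast
    show "psi p q 1 (tmul x y) = (psi p q 1 x + psi p q 1 y) mod 2 ^ (1 div 2)" unfolding P by simp
    show "Delta p q 1 (tmul x y) = dmul (2 ^ (1 div 2)) (Delta p q 1 x) (Delta p q 1 y)"
      unfolding xy xe ye D dmul_def by simp
  next
    have "tone 1 = Nd False Lf Lf" by (simp add: numeral_eq_Suc)
    then show "tone 1 \<in> J p q 1" unfolding J1_iff by blast
  qed
qed

lemma J2_iff: "x \<in> J p q 2 \<longleftrightarrow> (\<exists>f a. x = Nd f (Nd a Lf Lf) (Nd a Lf Lf))"
proof
  assume "x \<in> J p q 2"
  then have w: "wf_tree 2 x" and e: "tL x = tR x" unfolding J_2 by auto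
  from w obtain f A B where "x = Nd f A B" "wf_tree 1 A" by (cases x) (auto simp: numeral_eq_Suc)
  then show "\<exists>f a. x = Nd f (Nd a Lf Lf) (Nd a Lf Lf)" using e wf1E by (metis tL.simps(1) tR.simps(1))
next
  assume "\<exists>f a. x = Nd f (Nd a Lf Lf) (Nd a Lf Lf)"
  then show "x \<in> J p q 2" unfolding J_2 by (auto simp: numeral_eq_Suc)
qed

lemma Good_2: "Good p q 2"
proof -
  have P: "psi p q 2 (Nd f (Nd a Lf Lf) (Nd a Lf Lf)) = (if a then 1 else 0)" for f a by (simp add: psi_2)
  have D: "Delta p q 2 (Nd f (Nd a Lf Lf) (Nd a Lf Lf)) = (f, if a then 1 else 0)" for f a by (simp add: Delta_2 psi_2)
  show ?thesis unfolding Good_def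
  proof (intro conjI ballI)
    fix x assume x: "x \<in> J p q 2"
    then obtain f a where xe: "x = Nd f (Nd a Lf Lf) (Nd a Lf Lf)" using J2_iff by blast
    show "wf_tree 2 x" by (simp add: xe numeral_eq_Suc)
    show "tinv x \<in> J p q 2" unfolding J2_iff xe by simp
    show "0 \<le> psi p q 2 x" "psi p q 2 x < 2 ^ (2 div 2)" by (simp_all add: P xe)
    show "fst (Delta p q 2 x) = tf x" "0 \<le> snd (Delta p q 2 x)" "snd (Delta p q 2 x) < 2 ^ (2 div 2)"
      by (simp_all add: D xe)
    fix y assume y: "y \<in> J p q 2"
    then obtain g c where ye: "y = Nd g (Nd c Lf Lf) (Nd c Lf Lf)" using J2_iff by blast
    have xy: "tmul x y = Nd (f \<noteq> g) (Nd (a \<noteq> c) Lf Lf) (Nd (a \<noteq> c) Lf Lf)" by (simp add: xe ye)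
    show "tmul x y \<in> J p q 2" unfolding J2_iff xy by blast
    show "psi p q 2 (tmul x y) = (psi p q 2 x + psi p q 2 y) mod 2 ^ (2 div 2)"
      unfolding xy xe ye by (cases a; cases c) (simp_all add: P)
    show "Delta p q 2 (tmul x y) = dmul (2 ^ (2 div 2)) (Delta p q 2 x) (Delta p q 2 y)"
      unfolding xy xe ye by (cases a; cases c; cases f) (simp_all add: D dmul_def)
  next
    have "tone 2 = Nd False (Nd False Lf Lf) (Nd False Lf Lf)" by (simp add: numeral_eq_Suc)
    then show "tone 2 \<in> J p q 2" unfolding J2_iff by blast
  qed
qed

lemma GoodI:
  assumes "\<And>x. x \<in> J p q n \<Longrightarrow> wf_tree n x" "tone n \<in> J p q n"
    "\<And>x y. x \<in> J p q n \<Longrightarrow> y \<in> J p q n \<Longrightarrow> tmul x y \<in> J p q n"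
    "\<And>x. x \<in> J p q n \<Longrightarrow> tinv x \<in> J p q n"
    "\<And>x. x \<in> J p q n \<Longrightarrow> 0 \<le> psi p q n x \<and> psi p q n x < 2^(n div 2)"
    "\<And>x y. x \<in> J p q n \<Longrightarrow> y \<in> J p q n \<Longrightarrow> psi p q n (tmul x y) = (psi p q n x + psi p q n y) mod 2^(n div 2)"
    "\<And>x. x \<in> J p q n \<Longrightarrow> fst (Delta p q n x) = tf x \<and> 0 \<le> snd (Delta p q n x) \<and> snd (Delta p q n x) < 2^(n div 2)"
    "\<And>x y. x \<in> J p q n \<Longrightarrow> y \<in> J p q n \<Longrightarrow> Delta p q n (tmul x y) = dmul (2^(n div 2)) (Delta p q n x) (Delta p q n y)"
  shows "Good p q n"
  unfolding Good_def
proof (intro conjI)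
  show "\<forall>x\<in>J p q n. wf_tree n x" using assms(1) by (rule ballI)
  show "tone n \<in> J p q n" by (rule assms(2))
  show "\<forall>x\<in>J p q n. \<forall>y\<in>J p q n. tmul x y \<in> J p q n" using assms(3) by (intro ballI)
  show "\<forall>x\<in>J p q n. tinv x \<in> J p q n" using assms(4) by (rule ballI)
  show "\<forall>x\<in>J p q n. 0 \<le> psi p q n x \<and> psi p q n x < 2^(n div 2)" using assms(5) by (rule ballI)
  show "\<forall>x\<in>J p q n. \<forall>y\<in>J p q n. psi p q n (tmul x y) = (psi p q n x + psi p q n y) mod 2^(n div 2)"
    using assms(6) by (intro ballI)
  show "\<forall>x\<in>J p q n. fst (Delta p q n x) = tf x \<and> 0 \<le> snd (Delta p q n x) \<and> snd (Delta p q n x) < 2^(n div 2)"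
    using assms(7) by (rule ballI)
  show "\<forall>x\<in>J p q n. \<forall>y\<in>J p q n. Delta p q n (tmul x y) = dmul (2^(n div 2)) (Delta p q n x) (Delta p q n y)"
    using assms(8) by (intro ballI)
qed

lemma Good_all: assumes s: "odd (p + q)" shows "1 \<le> n \<Longrightarrow> Good p q n"
proof (induction n rule: less_induct)
  case (less n)
  show ?case
  proof (cases "n \<le> 2")
    case True
    then have "n = 1 \<or> n = 2" using less.prems by auto
    then show ?thesis using Good_1 Good_2 by auto
  next
    case False
    then obtain d where n: "n = Suc d" and d: "2 \<le> d" by (cases n) auto
    have Gd: "Good p q d" using less.IH n d by simp
    have sub: "tone (Suc d) \<in> J p q (Suc d)"
      "\<And>x y. x \<in> J p q (Suc d) \<Longrightarrow> y \<in> J p q (Suc d) \<Longrightarrow> tmul x y \<in> J p q (Suc d)"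
      "\<And>x. x \<in> J p q (Suc d) \<Longrightarrow> tinv x \<in> J p q (Suc d)"
      "\<And>x. x \<in> J p q (Suc d) \<Longrightarrow> wf_tree (Suc d) x"
      using step_sub[OF Gd d] by blast+
    show ?thesis
    proof (cases "even d")
      case True
      note st = step_odd[OF Gd d True s]
      show ?thesis unfolding n by (rule GoodI[OF sub(4) sub(1) sub(2) sub(3) st])
    next
      case False
      have d3: "3 \<le> d" using d False by presburger
      have Gd2: "Good p q (d - 1)" using less.IH n d by simp
      note st = step_even[OF Gd Gd2 d3 False s]
      show ?thesis unfolding n by (rule GoodI[OF sub(4) sub(1) sub(2) sub(3) st])
    qed
  qed
qed

theorem theorem1:
  fixes p q :: int and n :: nat
  assumes "p > 0" and "q > 0" and "odd (p + q)" and "n \<ge> 1"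
  shows "subgroup (J p q n) (autT (n + 1)) \<and>
    psi p q n \<in> hom ((autT (n + 1))\<lparr>carrier := J p q n\<rparr>) (integer_mod_group (2 ^ (n div 2))) \<and>
    Delta p q n \<in> hom ((autT (n + 1))\<lparr>carrier := J p q n\<rparr>) (dihedral (2 ^ (n div 2)))"
proof -
  have G: "Good p q n" using Good_all[OF assms(3) assms(4)] .
  have car: "carrier (autT (n + 1)) = {t. wf_tree n t}" by (simp add: autT_def)
  have mul: "x \<otimes>\<^bsub>autT (n + 1)\<^esub> y = tmul x y" for x y by (simp add: autT_def)
  have one: "\<one>\<^bsub>autT (n + 1)\<^esub> = tone n" by (simp add: autT_def)
  have inv: "inv\<^bsub>autT (n + 1)\<^esub> x = tinv x" if "x \<in> J p q n" for x
    using inv_autT[of "n + 1" x] Good_wf[OF G that] by simp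
  have sg: "subgroup (J p q n) (autT (n + 1))"
  proof
    show "J p q n \<subseteq> carrier (autT (n + 1))" using Good_wf[OF G] car by auto
    show "x \<otimes>\<^bsub>autT (n + 1)\<^esub> y \<in> J p q n" if "x \<in> J p q n" "y \<in> J p q n" for x y
      using Good_mul[OF G that] mul by simp
    show "\<one>\<^bsub>autT (n + 1)\<^esub> \<in> J p q n" using Good_one[OF G] one by simp
    show "inv\<^bsub>autT (n + 1)\<^esub> x \<in> J p q n" if "x \<in> J p q n" for x
      using Good_inv[OF G that] inv[OF that] by simp
  qed
  have h1: "psi p q n \<in> hom ((autT (n + 1))\<lparr>carrier := J p q n\<rparr>) (integer_mod_group (2 ^ (n div 2)))"
  proof (rule homI)
    fix x assume "x \<in> carrier ((autT (n + 1))\<lparr>carrier := J p q n\<rparr>)"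
    then have x: "x \<in> J p q n" by simp
    show "psi p q n x \<in> carrier (integer_mod_group (2 ^ (n div 2)))"
      using Good_psi_ge[OF G x] Good_psi_lt[OF G x] by (simp add: integer_mod_group_def)
  next
    fix x y assume "x \<in> carrier ((autT (n + 1))\<lparr>carrier := J p q n\<rparr>)" "y \<in> carrier ((autT (n + 1))\<lparr>carrier := J p q n\<rparr>)"
    then have x: "x \<in> J p q n" and y: "y \<in> J p q n" by simp_all
    show "psi p q n (x \<otimes>\<^bsub>(autT (n + 1))\<lparr>carrier := J p q n\<rparr>\<^esub> y) =
          psi p q n x \<otimes>\<^bsub>integer_mod_group (2 ^ (n div 2))\<^esub> psi p q n y"
      using Good_psi_hom[OF G x y] by (simp add: integer_mod_group_def autT_def)
  qed
  have h2: "Delta p q n \<in> hom ((autT (n + 1))\<lparr>carrier := J p q n\<rparr>) (dihedral (2 ^ (n div 2)))"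
  proof (rule homI)
    fix x assume "x \<in> carrier ((autT (n + 1))\<lparr>carrier := J p q n\<rparr>)"
    then have x: "x \<in> J p q n" by simp
    show "Delta p q n x \<in> carrier (dihedral (2 ^ (n div 2)))"
      using Good_Delta_ge[OF G x] Good_Delta_lt[OF G x] by (cases "Delta p q n x") (simp add: dihedral_def)
  next
    fix x y assume "x \<in> carrier ((autT (n + 1))\<lparr>carrier := J p q n\<rparr>)" "y \<in> carrier ((autT (n + 1))\<lparr>carrier := J p q n\<rparr>)"
    then have x: "x \<in> J p q n" and y: "y \<in> J p q n" by simp_all
    show "Delta p q n (x \<otimes>\<^bsub>(autT (n + 1))\<lparr>carrier := J p q n\<rparr>\<^esub> y) =
          Delta p q n x \<otimes>\<^bsub>dihedral (2 ^ (n div 2))\<^esub> Delta p q n y"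
      using Good_Delta_hom[OF G x y] by (simp add: dihedral_mult_eq autT_def)
  qed
  show ?thesis using sg h1 h2 by blast
qed

end
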